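(* Let $A=(a_{i,j})$ be an $n\times n$ Monge matrix and $B=(b_{i,j})$ an $n\times n$ Anti-Monge matrix, and consider RecovAP with $c_1(\{u_i,v_j\})=a_{i,j}$, $c_2(\{u_i,v_j\})=b_{i,j}$ and intersection bound $k$ (admitting a feasible solution). Then there is a feasible solution $M_1,M_2$ of minimum cost $c_1(M_1)+c_2(M_2)$ such that all $4$-cycles of $M_1,M_2$ are aligned, any two $4$-cycles are nested (one inside the other), and every $2$-cycle is nested inside every $4$-cycle.
   Context: $K_{n,n}$ has vertex classes $U=\{u_1,\dots,u_n\}$, $V=\{v_1,\dots,v_n\}$. RecovAP: find perfect matchings $M_1,M_2$ of $K_{n,n}$ with $|M_1\cap M_2|\ge k$ minimizing $c_1(M_1)+c_2(M_2)$. $A$ is Monge if $a_{i,j}+a_{k,l}\le a_{i,l}+a_{k,j}$ for all $i<k$, $j<l$; $B$ is Anti-Monge if the reverse inequality holds. For perfect matchings $M_1,M_2$, the multigraph $M_1\cup M_2$ decomposes into $M_1$-$M_2$-alternating cycles; an edge $\{u_i,v_j\}\in M_1\cap M_2$ is called a $2$-cycle $(i,j)$, and an alternating cycle with four edges $\{u_i,v_j\},\{u_{i'},v_{j'}\}\in M_1$, $\{u_i,v_{j'}\},\{u_{i'},v_j\}\in M_2$ is a $4$-cycle $(i,j,i',j')$; it is aligned if $i<i'$ and $j<j'$. An aligned $4$-cycle $(i_1,j_1,i_1',j_1')$ is nested inside an aligned $4$-cycle $(i_2,j_2,i_2',j_2')$ if $i_2<i_1<i_1'<i_2'$ and $j_2<j_1<j_1'<j_2'$;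 a $2$-cycle $(i_1,j_1)$ is nested inside $(i_2,j_2,i_2',j_2')$ if $i_2<i_1<i_2'$ and $j_2<j_1<j_2'$. *)

theory Defs
  imports Complex_Main
begin

text \<open>Vertices u_i, v_j of K_{n,n} are indexed by i, j in {1..n}; an edge {u_i,v_j}
  is represented by the pair (i,j). A matching is a set of such pairs.\<close>

definition perfect_matching :: "nat \<Rightarrow> (nat \<times> nat) set \<Rightarrow> bool" where
  "perfect_matching n M \<longleftrightarrow> M \<subseteq> {1..n} \<times> {1..n}
     \<and> (\<forall>i\<in>{1..n}. \<exists>!j. (i, j) \<in> M)
     \<and> (\<forall>j\<in>{1..n}. \<exists>!i. (i, j) \<in> M)"

definition monge :: "nat \<Rightarrow> (nat \<Rightarrow> nat \<Rightarrow> real) \<Rightarrow> bool" where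
  "monge n A \<longleftrightarrow> (\<forall>i j k l. 1 \<le> i \<and> i < k \<and> k \<le> n \<and> 1 \<le> j \<and> j < l \<and> l \<le> n \<longrightarrow>
       A i j + A k l \<le> A i l + A k j)"

definition anti_monge :: "nat \<Rightarrow> (nat \<Rightarrow> nat \<Rightarrow> real) \<Rightarrow> bool" where
  "anti_monge n B \<longleftrightarrow> (\<forall>i j k l. 1 \<le> i \<and> i < k \<and> k \<le> n \<and> 1 \<le> j \<and> j < l \<and> l \<le> n \<longrightarrow>
       B i j + B k l \<ge> B i l + B k j)"

definition mcost :: "(nat \<Rightarrow> nat \<Rightarrow> real) \<Rightarrow> (nat \<times> nat) set \<Rightarrow> real" where
  "mcost c M = (\<Sum>(i, j)\<in>M. c i j)"

definition recov_feasible :: "nat \<Rightarrow> nat \<Rightarrow> (nat \<times> nat) set \<Rightarrow> (nat \<times> nat) set \<Rightarrow> bool" where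
  "recov_feasible n k M1 M2 \<longleftrightarrow> perfect_matching n M1 \<and> perfect_matching n M2
     \<and> card (M1 \<inter> M2) \<ge> k"

definition recov_optimal :: "nat \<Rightarrow> nat \<Rightarrow> (nat \<Rightarrow> nat \<Rightarrow> real) \<Rightarrow> (nat \<Rightarrow> nat \<Rightarrow> real)
     \<Rightarrow> (nat \<times> nat) set \<Rightarrow> (nat \<times> nat) set \<Rightarrow> bool" where
  "recov_optimal n k c1 c2 M1 M2 \<longleftrightarrow> recov_feasible n k M1 M2 \<and>
     (\<forall>N1 N2. recov_feasible n k N1 N2 \<longrightarrow> mcost c1 M1 + mcost c2 M2 \<le> mcost c1 N1 + mcost c2 N2)"

definition two_cycle :: "(nat \<times> nat) set \<Rightarrow> (nat \<times> nat) set \<Rightarrow> nat \<Rightarrow> nat \<Rightarrow> bool" where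
  "two_cycle M1 M2 i j \<longleftrightarrow> (i, j) \<in> M1 \<and> (i, j) \<in> M2"

definition four_cycle :: "(nat \<times> nat) set \<Rightarrow> (nat \<times> nat) set \<Rightarrow> nat \<Rightarrow> nat \<Rightarrow> nat \<Rightarrow> nat \<Rightarrow> bool" where
  "four_cycle M1 M2 i j i' j' \<longleftrightarrow> i \<noteq> i' \<and> j \<noteq> j' \<and>
     (i, j) \<in> M1 \<and> (i', j') \<in> M1 \<and> (i, j') \<in> M2 \<and> (i', j) \<in> M2"

definition aligned :: "nat \<Rightarrow> nat \<Rightarrow> nat \<Rightarrow> nat \<Rightarrow> bool" where
  "aligned i j i' j' \<longleftrightarrow> i < i' \<and> j < j'"

definition nested4 :: "nat \<times> nat \<times> nat \<times> nat \<Rightarrow> nat \<times> nat \<times> nat \<times> nat \<Rightarrow> bool" where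
  "nested4 C1 C2 \<longleftrightarrow> (case C1 of (i1, j1, i1', j1') \<Rightarrow> case C2 of (i2, j2, i2', j2') \<Rightarrow>
      i2 < i1 \<and> i1 < i1' \<and> i1' < i2' \<and> j2 < j1 \<and> j1 < j1' \<and> j1' < j2')"

definition nested2 :: "nat \<times> nat \<Rightarrow> nat \<times> nat \<times> nat \<times> nat \<Rightarrow> bool" where
  "nested2 C1 C2 \<longleftrightarrow> (case C1 of (i1, j1) \<Rightarrow> case C2 of (i2, j2, i2', j2') \<Rightarrow>
      i2 < i1 \<and> i1 < i2' \<and> j2 < j1 \<and> j1 < j2')"

end

theory Submission imports Defs "HOL-Combinatorics.Permutations"
begin

definition gr :: "nat \<Rightarrow> (nat \<Rightarrow> nat) \<Rightarrow> (nat \<times> nat) set" where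
  "gr n s = (\<lambda>i. (i, s i)) ` {1..n}"

lemma gr_pm: assumes "s permutes {1..n}" shows "perfect_matching n (gr n s)"
proof -
  have im: "\<And>i. s i \<in> {1..n} \<longleftrightarrow> i \<in> {1..n}" using permutes_in_image[OF assms] by blast
  show ?thesis unfolding perfect_matching_def gr_def
  proof (intro conjI ballI)
    show "(\<lambda>i. (i, s i)) ` {1..n} \<subseteq> {1..n} \<times> {1..n}"
    proof (rule subsetI)
      fix x assume "x \<in> (\<lambda>i. (i, s i)) ` {1..n}"
      then obtain i where i: "i \<in> {1..n}" "x = (i, s i)" by blast
      then have "s i \<in> {1..n}" using im by blast
      then show "x \<in> {1..n} \<times> {1..n}" using i by blast
    qed
  next
    fix i assume i: "i \<in> {1..n}"
    show "\<exists>!j. (i, j) \<in> (\<lambda>i. (i, s i)) ` {1..n}"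
    proof (rule ex1I[of _ "s i"])
      show "(i, s i) \<in> (\<lambda>i. (i, s i)) ` {1..n}" using i by blast
    next
      fix j assume "(i, j) \<in> (\<lambda>i. (i, s i)) ` {1..n}"
      then show "j = s i" by blast
    qed
  next
    fix j assume j: "j \<in> {1..n}"
    have "s (inv s j) = j" using permutes_inverses[OF assms] by simp
    moreover have "inv s j \<in> {1..n}" using im j \<open>s (inv s j) = j\<close> by metis
    ultimately show "\<exists>!i. (i, j) \<in> (\<lambda>i. (i, s i)) ` {1..n}"
    proof (intro ex1I[of _ "inv s j"])
      have "(inv s j, s (inv s j)) \<in> (\<lambda>i. (i, s i)) ` {1..n}"
        using \<open>inv s j \<in> {1..n}\<close> by (rule imageI)
      then show "(inv s j, j) \<in> (\<lambda>i. (i, s i)) ` {1..n}"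
        using \<open>s (inv s j) = j\<close> by simp
    next
      fix i assume "(i, j) \<in> (\<lambda>i. (i, s i)) ` {1..n}"
      then have "j = s i" by blast
      then show "i = inv s j" using permutes_inverses(2)[OF assms] by simp
    qed
  qed
qed

lemma pm_gr: assumes "perfect_matching n M" shows "\<exists>s. s permutes {1..n} \<and> M = gr n s"
proof -
  let ?S = "{1..n::nat}"
  define s where "s i = (if i \<in> ?S then (THE j. (i,j) \<in> M) else i)" for i
  have sub: "M \<subseteq> ?S \<times> ?S" and r: "\<forall>i\<in>?S. \<exists>!j. (i, j) \<in> M" and c: "\<forall>j\<in>?S. \<exists>!i. (i, j) \<in> M"
    using assms unfolding perfect_matching_def by auto
  have sin: "(i, s i) \<in> M" if "i \<in> ?S" for i
  proof -
    have "\<exists>!j. (i,j) \<in> M" using r that by blast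
    from theI'[OF this] show ?thesis using that unfolding s_def by simp
  qed
  have seq: "s i = j" if "(i,j) \<in> M" for i j
  proof -
    have "i \<in> ?S" using sub that by auto
    then have "\<exists>!j. (i,j) \<in> M" "(i, s i) \<in> M" using r sin by auto
    then show ?thesis using that by blast
  qed
  have "bij_betw s ?S ?S"
  proof (rule bij_betw_imageI)
    show "inj_on s ?S"
    proof (rule inj_onI)
      fix x y assume "x \<in> ?S" "y \<in> ?S" "s x = s y"
      then have "(x, s x) \<in> M" "(y, s x) \<in> M" using sin by metis+
      moreover have "s x \<in> ?S" using sub \<open>(x, s x) \<in> M\<close> by auto
      ultimately show "x = y" using c by blast
    qed
    show "s ` ?S = ?S"
    proof
      show "s ` ?S \<subseteq> ?S" using sin sub by blast
      show "?S \<subseteq> s ` ?S"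
      proof
        fix j assume "j \<in> ?S"
        then obtain i where "(i,j) \<in> M" using c by blast
        then show "j \<in> s ` ?S" using seq sub by force
      qed
    qed
  qed
  then have "s permutes ?S" by (rule bij_imp_permutes) (auto simp add: s_def)
  moreover have "M = gr n s" unfolding gr_def
  proof
    show "M \<subseteq> (\<lambda>i. (i, s i)) ` ?S" using seq sub by force
    show "(\<lambda>i. (i, s i)) ` ?S \<subseteq> M" using sin by auto
  qed
  ultimately show ?thesis by blast
qed

lemma mcost_gr: "mcost c (gr n s) = (\<Sum>i\<in>{1..n}. c i (s i))"
  unfolding mcost_def gr_def by (subst sum.reindex) (auto simp: inj_on_def)

lemma card_gr_int: "card (gr n s1 \<inter> gr n s2) = card {i\<in>{1..n}. s1 i = s2 i}"
proof -
  have "gr n s1 \<inter> gr n s2 = (\<lambda>i. (i, s1 i)) ` {i\<in>{1..n}. s1 i = s2 i}" unfolding gr_def by auto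
  then show ?thesis by (simp add: card_image inj_on_def)
qed

lemma sum_swap_diff:
  fixes f :: "nat \<Rightarrow> nat \<Rightarrow> real"
  assumes "finite S" "p \<in> S" "q \<in> S" "p \<noteq> q"
  shows "(\<Sum>i\<in>S. f i ((s \<circ> transpose p q) i)) = (\<Sum>i\<in>S. f i (s i)) - f p (s p) - f q (s q) + f p (s q) + f q (s p)"
proof -
  have e: "(\<Sum>i\<in>S - {p} - {q}. f i ((s \<circ> transpose p q) i)) = (\<Sum>i\<in>S - {p} - {q}. f i (s i))"
    by (rule sum.cong) auto
  have "(\<Sum>i\<in>S. f i ((s \<circ> transpose p q) i)) = f p (s q) + (f q (s p) + (\<Sum>i\<in>S - {p} - {q}. f i ((s \<circ> transpose p q) i)))"
    using assms by (simp add: sum.remove[of S p] sum.remove[of "S - {p}" q])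
  moreover have "(\<Sum>i\<in>S. f i (s i)) = f p (s p) + (f q (s q) + (\<Sum>i\<in>S - {p} - {q}. f i (s i)))"
    using assms by (simp add: sum.remove[of S p] sum.remove[of "S - {p}" q])
  ultimately show ?thesis using e by simp
qed

definition costf :: "nat \<Rightarrow> (nat \<Rightarrow> nat \<Rightarrow> real) \<Rightarrow> (nat \<Rightarrow> nat) \<Rightarrow> real" where
  "costf n f s = (\<Sum>i\<in>{1..n}. f i (s i))"

definition W :: "nat \<Rightarrow> (nat \<Rightarrow> nat) \<Rightarrow> real" where
  "W n s = (\<Sum>i\<in>{1..n}. real i * real (s i))"

lemma swap1:
  assumes "monge n A" "s permutes {1..n}" "p \<in> {1..n}" "q \<in> {1..n}" "p < q" "s q < s p"
  shows "costf n A (s \<circ> transpose p q) \<le> costf n A s \<and> W n s < W n (s \<circ> transpose p q)"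
proof
  have sp: "s p \<in> {1..n}" "s q \<in> {1..n}" using assms permutes_in_image by metis+
  have m: "A p (s q) + A q (s p) \<le> A p (s p) + A q (s q)"
    using assms(1) sp assms(3-6) unfolding monge_def by auto
  show "costf n A (s \<circ> transpose p q) \<le> costf n A s"
    unfolding costf_def using sum_swap_diff[of "{1..n}" p q A s] assms m by simp
  have "W n (s \<circ> transpose p q) = W n s - real p * real (s p) - real q * real (s q) + real p * real (s q) + real q * real (s p)"
    unfolding W_def using sum_swap_diff[of "{1..n}" p q "\<lambda>i j. real i * real j" s] assms by simp
  moreover have "real p * real (s q) + real q * real (s p) - real p * real (s p) - real q * real (s q) = (real q - real p) * (real (s p) - real (s q))"
    by (simp add: algebra_simps)
  moreover have "(real q - real p) * (real (s p) - real (s q)) > 0" using assms(5,6) by simp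
  ultimately show "W n s < W n (s \<circ> transpose p q)" by linarith
qed

lemma swap2:
  assumes "anti_monge n B" "s permutes {1..n}" "p \<in> {1..n}" "q \<in> {1..n}" "p < q" "s p < s q"
  shows "costf n B (s \<circ> transpose p q) \<le> costf n B s \<and> W n (s \<circ> transpose p q) < W n s"
proof
  have sp: "s p \<in> {1..n}" "s q \<in> {1..n}" using assms permutes_in_image by metis+
  have m: "B p (s q) + B q (s p) \<le> B p (s p) + B q (s q)"
    using assms(1) sp assms(3-6) unfolding anti_monge_def by auto
  show "costf n B (s \<circ> transpose p q) \<le> costf n B s"
    unfolding costf_def using sum_swap_diff[of "{1..n}" p q B s] assms m by simp
  have "W n (s \<circ> transpose p q) = W n s - real p * real (s p) - real q * real (s q) + real p * real (s q) + real q * real (s p)"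
    unfolding W_def using sum_swap_diff[of "{1..n}" p q "\<lambda>i j. real i * real j" s] assms by simp
  moreover have "real p * real (s q) + real q * real (s p) - real p * real (s p) - real q * real (s q) = (real q - real p) * (real (s p) - real (s q))"
    by (simp add: algebra_simps)
  moreover have "(real q - real p) * (real (s p) - real (s q)) < 0" using assms(5,6)
    by (simp add: mult_pos_neg)
  ultimately show "W n (s \<circ> transpose p q) < W n s" by linarith
qed

lemma img_eq:
  assumes "s permutes S" "s' permutes S" "\<forall>x. x \<notin> R \<longrightarrow> s' x = s x"
  shows "s' ` R = s ` R"
proof -
  have b: "bij s" "bij s'" using assms permutes_bij by blast+
  have "s' ` (- R) = s ` (- R)" using assms(3) by auto
  then have "- (s' ` R) = - (s ` R)" using b by (simp add: bij_image_Compl_eq)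
  then show ?thesis by simp
qed

lemma sort1:
  assumes "monge n A"
  shows "R \<subseteq> {1..n} \<Longrightarrow> s permutes {1..n} \<Longrightarrow> \<exists>s'. s' permutes {1..n} \<and> (\<forall>x. x \<notin> R \<longrightarrow> s' x = s x)
     \<and> (\<forall>p\<in>R. \<forall>q\<in>R. p < q \<longrightarrow> s' p < s' q) \<and> costf n A s' \<le> costf n A s \<and> (s' = s \<or> W n s < W n s')"
proof (induction "card R" arbitrary: R s rule: less_induct)
  case less
  show ?case
  proof (cases "R = {}")
    case True then show ?thesis using less.prems(2) by (intro exI[of _ s]) simp
  next
    case False
    have fin: "finite R" using less.prems(1) finite_subset by blast
    define r where "r = Min R"
    have rR: "r \<in> R" using Min_in fin False r_def by blast
    have rmin: "\<forall>x\<in>R. r \<le> x" using fin r_def by simp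
    define t where "t = Min (s ` R)"
    have "t \<in> s ` R" using Min_in fin False t_def by blast
    then obtain r0 where r0: "r0 \<in> R" "s r0 = t" by blast
    have tmin: "\<forall>x\<in>R. t \<le> s x" using fin t_def by simp
    have inj: "inj s" using less.prems(2) permutes_inj by blast
    define s0 where "s0 = (if r0 = r then s else s \<circ> transpose r r0)"
    have s0perm: "s0 permutes {1..n}" unfolding s0_def using less.prems rR r0
      by (auto intro!: permutes_compose permutes_swap_id)
    have s0r: "s0 r = t" unfolding s0_def using r0 by auto
    have s0out: "\<forall>x. x \<notin> R \<longrightarrow> s0 x = s x" 
    proof (intro allI impI)
      fix x assume "x \<notin> R"
      then have "x \<noteq> r" "x \<noteq> r0" using rR r0 by auto
      then show "s0 x = s x" unfolding s0_def by simp
    qed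
    have s0cost: "costf n A s0 \<le> costf n A s \<and> (s0 = s \<or> W n s < W n s0)"
    proof (cases "r0 = r")
      case True then show ?thesis unfolding s0_def by simp
    next
      case False
      have "r < r0" using False rmin r0 by force
      moreover have "s r0 < s r" using tmin rR r0 inj False by (metis injD le_neq_implies_less)
      moreover have "r \<in> {1..n}" "r0 \<in> {1..n}" using less.prems(1) rR r0 by blast+
      ultimately have "costf n A (s \<circ> transpose r r0) \<le> costf n A s \<and> W n s < W n (s \<circ> transpose r r0)"
        using swap1[OF assms less.prems(2)] by blast
      then show ?thesis unfolding s0_def using False by simp
    qed
    have "card (R - {r}) < card R" using fin rR by (rule card_Diff1_less)
    moreover have "R - {r} \<subseteq> {1..n}" using less.prems by auto
    ultimately obtain s' where s': "s' permutes {1..n}" "\<forall>x. x \<notin> R - {r} \<longrightarrow> s' x = s0 x"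
      "\<forall>p\<in>R - {r}. \<forall>q\<in>R - {r}. p < q \<longrightarrow> s' p < s' q" "costf n A s' \<le> costf n A s0" "s' = s0 \<or> W n s0 < W n s'"
      using less.hyps s0perm by blast
    have s'r: "s' r = t" using s' s0r by auto
    have s'out: "\<forall>x. x \<notin> R \<longrightarrow> s' x = s x" using s'(2) s0out by auto
    have im: "s' ` R = s ` R" using img_eq[OF less.prems(2) s'(1) s'out] .
    have inj': "inj s'" using s'(1) permutes_inj by blast
    have mono: "\<forall>p\<in>R. \<forall>q\<in>R. p < q \<longrightarrow> s' p < s' q"
    proof (intro ballI impI)
      fix p q assume pq: "p \<in> R" "q \<in> R" "p < q"
      show "s' p < s' q"
      proof (cases "p = r")
        case True
        then have "q \<noteq> r" using pq by simp
        then have "s' q \<noteq> t" using s'r inj' by (metis injD)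
        moreover have "s' q \<in> s ` R" using im pq by blast
        ultimately show ?thesis using tmin True s'r by (metis imageE le_neq_implies_less)
      next
        case False
        then have "q \<noteq> r" using pq rmin by force
        then show ?thesis using False s'(3) pq by blast
      qed
    qed
    show ?thesis
      by (rule exI[of _ s']) (use s' s'out mono s0cost in auto)
  qed
qed

lemma sort2:
  assumes "anti_monge n B"
  shows "R \<subseteq> {1..n} \<Longrightarrow> s permutes {1..n} \<Longrightarrow> \<exists>s'. s' permutes {1..n} \<and> (\<forall>x. x \<notin> R \<longrightarrow> s' x = s x)
     \<and> (\<forall>p\<in>R. \<forall>q\<in>R. p < q \<longrightarrow> s' q < s' p) \<and> costf n B s' \<le> costf n B s \<and> (s' = s \<or> W n s' < W n s)"
proof (induction "card R" arbitrary: R s rule: less_induct)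
  case less
  show ?case
  proof (cases "R = {}")
    case True then show ?thesis using less.prems(2) by (intro exI[of _ s]) simp
  next
    case False
    have fin: "finite R" using less.prems(1) finite_subset by blast
    define r where "r = Min R"
    have rR: "r \<in> R" using Min_in fin False r_def by blast
    have rmin: "\<forall>x\<in>R. r \<le> x" using fin r_def by simp
    define t where "t = Max (s ` R)"
    have "t \<in> s ` R" using Max_in fin False t_def by blast
    then obtain r0 where r0: "r0 \<in> R" "s r0 = t" by blast
    have tmin: "\<forall>x\<in>R. s x \<le> t" using fin t_def by simp
    have inj: "inj s" using less.prems(2) permutes_inj by blast
    define s0 where "s0 = (if r0 = r then s else s \<circ> transpose r r0)"
    have s0perm: "s0 permutes {1..n}" unfolding s0_def using less.prems rR r0
      by (auto intro!: permutes_compose permutes_swap_id)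
    have s0r: "s0 r = t" unfolding s0_def using r0 by auto
    have s0out: "\<forall>x. x \<notin> R \<longrightarrow> s0 x = s x" 
    proof (intro allI impI)
      fix x assume "x \<notin> R"
      then have "x \<noteq> r" "x \<noteq> r0" using rR r0 by auto
      then show "s0 x = s x" unfolding s0_def by simp
    qed
    have s0cost: "costf n B s0 \<le> costf n B s \<and> (s0 = s \<or> W n s0 < W n s)"
    proof (cases "r0 = r")
      case True then show ?thesis unfolding s0_def by simp
    next
      case False
      have "r < r0" using False rmin r0 by force
      moreover have "s r < s r0" using tmin rR r0 inj False by (metis injD le_neq_implies_less)
      moreover have "r \<in> {1..n}" "r0 \<in> {1..n}" using less.prems(1) rR r0 by blast+
      ultimately have "costf n B (s \<circ> transpose r r0) \<le> costf n B s \<and> W n (s \<circ> transpose r r0) < W n s"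
        using swap2[OF assms less.prems(2)] by blast
      then show ?thesis unfolding s0_def using False by simp
    qed
    have "card (R - {r}) < card R" using fin rR by (rule card_Diff1_less)
    moreover have "R - {r} \<subseteq> {1..n}" using less.prems by auto
    ultimately obtain s' where s': "s' permutes {1..n}" "\<forall>x. x \<notin> R - {r} \<longrightarrow> s' x = s0 x"
      "\<forall>p\<in>R - {r}. \<forall>q\<in>R - {r}. p < q \<longrightarrow> s' q < s' p" "costf n B s' \<le> costf n B s0" "s' = s0 \<or> W n s' < W n s0"
      using less.hyps s0perm by blast
    have s'r: "s' r = t" using s' s0r by auto
    have s'out: "\<forall>x. x \<notin> R \<longrightarrow> s' x = s x" using s'(2) s0out by auto
    have im: "s' ` R = s ` R" using img_eq[OF less.prems(2) s'(1) s'out] .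
    have inj': "inj s'" using s'(1) permutes_inj by blast
    have mono: "\<forall>p\<in>R. \<forall>q\<in>R. p < q \<longrightarrow> s' q < s' p"
    proof (intro ballI impI)
      fix p q assume pq: "p \<in> R" "q \<in> R" "p < q"
      show "s' q < s' p"
      proof (cases "p = r")
        case True
        then have "q \<noteq> r" using pq by simp
        then have "s' q \<noteq> t" using s'r inj' by (metis injD)
        moreover have "s' q \<in> s ` R" using im pq by blast
        ultimately show ?thesis using tmin True s'r by (metis imageE le_neq_implies_less)
      next
        case False
        then have "q \<noteq> r" using pq rmin by force
        then show ?thesis using False s'(3) pq by blast
      qed
    qed
    show ?thesis
      by (rule exI[of _ s']) (use s' s'out mono s0cost in auto)
  qed
qed

lemma mid:
  fixes T :: "nat set"
  assumes "finite T" "card T \<le> 3" "l1 < u" "u < h1" "l2 < v" "v < h2"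
    "l1 \<in> T" "u \<in> T" "h1 \<in> T" "l2 \<in> T" "v \<in> T" "h2 \<in> T"
  shows "u = v"
proof (rule ccontr)
  assume "u \<noteq> v"
  then consider "u < v" | "v < u" by linarith
  then show False
  proof cases
    case 1
    have "card {l1,u,v,h2} = 4" using 1 assms by auto
    moreover have "card {l1,u,v,h2} \<le> card T" using assms by (intro card_mono) auto
    ultimately show False using assms by linarith
  next
    case 2
    have "card {l2,v,u,h1} = 4" using 2 assms by auto
    moreover have "card {l2,v,u,h1} \<le> card T" using assms by (intro card_mono) auto
    ultimately show False using assms by linarith
  qed
qed

lemma cardlem:
  assumes "finite N" "finite Ob" "Ob - R \<subseteq> N" "Ob \<inter> R \<subseteq> {i}" "m \<in> N" "m \<in> R"
  shows "card Ob \<le> card N"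
proof -
  have "card Ob \<le> card (insert i (Ob - R))" using assms by (intro card_mono) auto
  also have "\<dots> \<le> Suc (card (Ob - R))" using assms by (simp add: card_insert_if)
  also have "\<dots> = card (insert m (Ob - R))" using assms by simp
  also have "\<dots> \<le> card N" using assms by (intro card_mono) auto
  finally show ?thesis .
qed

lemma fc_gr: "four_cycle (gr n s1) (gr n s2) i j i' j' \<longleftrightarrow> i \<noteq> i' \<and> j \<noteq> j' \<and> i \<in> {1..n} \<and> i' \<in> {1..n}
   \<and> s1 i = j \<and> s1 i' = j' \<and> s2 i = j' \<and> s2 i' = j"
  unfolding four_cycle_def gr_def by auto

lemma tc_gr: "two_cycle (gr n s1) (gr n s2) i j \<longleftrightarrow> i \<in> {1..n} \<and> s1 i = j \<and> s2 i = j"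
  unfolding two_cycle_def gr_def by auto

theorem lemma9:
  fixes n k :: nat and A B :: "nat \<Rightarrow> nat \<Rightarrow> real"
  assumes "monge n A" and "anti_monge n B"
    and "\<exists>M1 M2. recov_feasible n k M1 M2"
  shows "\<exists>M1 M2. recov_optimal n k A B M1 M2
     \<and> (\<forall>i j i' j'. four_cycle M1 M2 i j i' j' \<and> i < i' \<longrightarrow> aligned i j i' j')
     \<and> (\<forall>i1 j1 i1' j1' i2 j2 i2' j2'.
           four_cycle M1 M2 i1 j1 i1' j1' \<and> i1 < i1' \<and>
           four_cycle M1 M2 i2 j2 i2' j2' \<and> i2 < i2' \<and>
           (i1, j1, i1', j1') \<noteq> (i2, j2, i2', j2') \<longrightarrow>
           nested4 (i1, j1, i1', j1') (i2, j2, i2', j2') \<or> nested4 (i2, j2, i2', j2') (i1, j1, i1', j1'))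
     \<and> (\<forall>i j i2 j2 i2' j2'. two_cycle M1 M2 i j \<and> four_cycle M1 M2 i2 j2 i2' j2' \<and> i2 < i2' \<longrightarrow>
           nested2 (i, j) (i2, j2, i2', j2'))"
proof -
  let ?S = "{1..n::nat}"
  define F where "F = {(s1, s2). s1 permutes ?S \<and> s2 permutes ?S \<and> k \<le> card {i\<in>?S. s1 i = s2 i}}"
  define cf where "cf = (\<lambda>x. costf n A (fst x) + costf n B (snd x))"
  define Ph where "Ph = (\<lambda>x. W n (snd x) - W n (fst x))"
  have finF: "finite F"
  proof (rule finite_subset)
    show "F \<subseteq> {p. p permutes ?S} \<times> {p. p permutes ?S}" unfolding F_def by auto
    show "finite ({p. p permutes ?S} \<times> {p. p permutes ?S})" using finite_permutations by blast
  qed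
  obtain N1 N2 where "recov_feasible n k N1 N2" using assms(3) by blast
  then obtain u1 u2 where "u1 permutes ?S" "u2 permutes ?S" "N1 = gr n u1" "N2 = gr n u2" "k \<le> card (N1 \<inter> N2)"
    unfolding recov_feasible_def using pm_gr by metis
  then have "(u1, u2) \<in> F" unfolding F_def using card_gr_int by auto
  then have Fne: "F \<noteq> {}" by blast
  define c0 where "c0 = Min (cf ` F)"
  define F0 where "F0 = {x\<in>F. cf x = c0}"
  have "c0 \<in> cf ` F" unfolding c0_def using finF Fne by simp
  then have F0ne: "F0 \<noteq> {}" unfolding F0_def by auto
  have finF0: "finite F0" unfolding F0_def using finF by simp
  have "Min (Ph ` F0) \<in> Ph ` F0" using finF0 F0ne by simp
  then obtain x0 where x0: "x0 \<in> F0" "Ph x0 = Min (Ph ` F0)" by auto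
  obtain s1 s2 where x0eq: "x0 = (s1, s2)" by (cases x0)
  have inF: "(s1, s2) \<in> F" using x0 x0eq unfolding F0_def by auto
  have p1: "s1 permutes ?S" and p2: "s2 permutes ?S" and kc: "k \<le> card {i\<in>?S. s1 i = s2 i}"
    using inF unfolding F_def by auto
  have opt: "cf (s1, s2) \<le> cf y" if "y \<in> F" for y
  proof -
    have "cf (s1, s2) = c0" using x0 x0eq unfolding F0_def by auto
    then show ?thesis unfolding c0_def using finF that by simp
  qed
  have key: "t1 = s1 \<and> t2 = s2" if t: "t1 permutes ?S" "t2 permutes ?S" "k \<le> card {i\<in>?S. t1 i = t2 i}"
    "costf n A t1 \<le> costf n A s1" "costf n B t2 \<le> costf n B s2"
    "t1 = s1 \<or> W n s1 < W n t1" "t2 = s2 \<or> W n t2 < W n s2" for t1 t2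
  proof (rule ccontr)
    assume ne: "\<not> (t1 = s1 \<and> t2 = s2)"
    have tF: "(t1, t2) \<in> F" using t unfolding F_def by auto
    have "cf (t1, t2) \<le> cf (s1, s2)" using t unfolding cf_def by simp
    moreover have "cf (s1, s2) \<le> cf (t1, t2)" using opt tF .
    ultimately have "(t1, t2) \<in> F0" using tF x0 x0eq unfolding F0_def by auto
    then have "Ph (s1, s2) \<le> Ph (t1, t2)" using x0 x0eq finF0 by simp
    moreover have "Ph (t1, t2) < Ph (s1, s2)" using t ne unfolding Ph_def by auto
    ultimately show False by simp
  qed
  have finS: "finite {i\<in>?S. P i}" for P by simp
  have inj1: "inj s1" and inj2: "inj s2" using p1 p2 permutes_inj by blast+
  have mono1: "s1 p < s1 q" if "p \<in> ?S" "q \<in> ?S" "p < q" "s1 p \<noteq> s2 p" "s1 q \<noteq> s2 q" for p q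
  proof (rule ccontr)
    assume "\<not> s1 p < s1 q"
    moreover have "s1 p \<noteq> s1 q" using inj1 that by (metis injD less_irrefl)
    ultimately have lt: "s1 q < s1 p" by simp
    let ?t = "s1 \<circ> transpose p q"
    have tp: "?t permutes ?S" using p1 that by (auto intro!: permutes_compose permutes_swap_id)
    have "{i\<in>?S. s1 i = s2 i} \<subseteq> {i\<in>?S. ?t i = s2 i}" using that by (auto simp: transpose_def)
    then have "k \<le> card {i\<in>?S. ?t i = s2 i}" using kc card_mono[OF finS] by (meson le_trans)
    then have "?t = s1" using key[OF tp p2] swap1[OF assms(1) p1 that(1,2,3) lt] by auto
    then have "?t p = s1 p" by simp
    then show False using lt by simp
  qed
  have mono2: "s2 q < s2 p" if "p \<in> ?S" "q \<in> ?S" "p < q" "s1 p \<noteq> s2 p" "s1 q \<noteq> s2 q" for p q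
  proof (rule ccontr)
    assume "\<not> s2 q < s2 p"
    moreover have "s2 p \<noteq> s2 q" using inj2 that by (metis injD less_irrefl)
    ultimately have lt: "s2 p < s2 q" by simp
    let ?t = "s2 \<circ> transpose p q"
    have tp: "?t permutes ?S" using p2 that by (auto intro!: permutes_compose permutes_swap_id)
    have "{i\<in>?S. s1 i = s2 i} \<subseteq> {i\<in>?S. s1 i = ?t i}" using that by (auto simp: transpose_def)
    then have "k \<le> card {i\<in>?S. s1 i = ?t i}" using kc card_mono[OF finS] by (meson le_trans)
    then have "?t = s2" using key[OF p1 tp] swap2[OF assms(2) p2 that(1,2,3) lt] by auto
    then have "?t p = s2 p" by simp
    then show False using lt by simp
  qed
  have C1: "aligned i j i' j'" if "four_cycle (gr n s1) (gr n s2) i j i' j'" "i < i'" for i j i' j'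
    using that mono1[of i i'] unfolding fc_gr aligned_def by auto
  have C2: "nested4 (i1, j1, i1', j1') (i2, j2, i2', j2') \<or> nested4 (i2, j2, i2', j2') (i1, j1, i1', j1')"
    if f: "four_cycle (gr n s1) (gr n s2) i1 j1 i1' j1'" "i1 < i1'"
      "four_cycle (gr n s1) (gr n s2) i2 j2 i2' j2'" "i2 < i2'"
      "(i1, j1, i1', j1') \<noteq> (i2, j2, i2', j2')" for i1 j1 i1' j1' i2 j2 i2' j2'
  proof -
    have a1: "j1 < j1'" and a2: "j2 < j2'" using C1 f unfolding aligned_def by blast+
    have g: "i1 \<in> ?S" "i1' \<in> ?S" "s1 i1 = j1" "s1 i1' = j1'" "s2 i1 = j1'" "s2 i1' = j1"
      "i2 \<in> ?S" "i2' \<in> ?S" "s1 i2 = j2" "s1 i2' = j2'" "s2 i2 = j2'" "s2 i2' = j2"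
      using f unfolding fc_gr by auto
    have d: "i1 \<noteq> i2"
    proof
      assume e: "i1 = i2"
      then have "j1 = j2" "j1' = j2'" using g by auto
      then have "s1 i1' = s1 i2'" using g by simp
      then have "i1' = i2'" using inj1 by (meson injD)
      then show False using f(5) e \<open>j1 = j2\<close> \<open>j1' = j2'\<close> by simp
    qed
    have d2: "i1 \<noteq> i2'" "i1' \<noteq> i2" "i1' \<noteq> i2'"
    proof -
      show "i1 \<noteq> i2'" using g a1 a2 by force
      show "i1' \<noteq> i2" using g a1 a2 by force
      show "i1' \<noteq> i2'"
      proof
        assume e: "i1' = i2'"
        then have "j1 = j2" "j1' = j2'" using g by auto
        then have "s1 i1 = s1 i2" using g by simp
        then have "i1 = i2" using inj1 by (meson injD)
        then show False using d by simp
      qed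
    qed
    have ne: "s1 i1 \<noteq> s2 i1" "s1 i1' \<noteq> s2 i1'" "s1 i2 \<noteq> s2 i2" "s1 i2' \<noteq> s2 i2'"
      using g a1 a2 by auto
    note m1 = mono1[OF _ _ _ ne(1) ne(3)] mono1[OF _ _ _ ne(1) ne(4)] mono1[OF _ _ _ ne(2) ne(3)] mono1[OF _ _ _ ne(2) ne(4)]
      mono1[OF _ _ _ ne(3) ne(1)] mono1[OF _ _ _ ne(3) ne(2)] mono1[OF _ _ _ ne(4) ne(1)] mono1[OF _ _ _ ne(4) ne(2)]
    note m2 = mono2[OF _ _ _ ne(1) ne(3)] mono2[OF _ _ _ ne(1) ne(4)] mono2[OF _ _ _ ne(2) ne(3)] mono2[OF _ _ _ ne(2) ne(4)]
      mono2[OF _ _ _ ne(3) ne(1)] mono2[OF _ _ _ ne(3) ne(2)] mono2[OF _ _ _ ne(4) ne(1)] mono2[OF _ _ _ ne(4) ne(2)]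
    show ?thesis
    proof (cases "i1 < i2")
      case True
      have "j1 < j2" "j2' < j1'" using m1(1) m2(1) g True by auto
      have "i2 < i1'"
      proof (rule ccontr)
        assume "\<not> i2 < i1'"
        then have "i1' < i2" using d2 by simp
        then show False using m2(3) g \<open>j1 < j2\<close> a2 \<open>j2' < j1'\<close> by auto
      qed
      have "i2' < i1'"
      proof (rule ccontr)
        assume "\<not> i2' < i1'"
        then have "i1' < i2'" using d2 by simp
        then show False using m1(4) g \<open>j2' < j1'\<close> by auto
      qed
      then show ?thesis unfolding nested4_def using True \<open>j1 < j2\<close> \<open>j2' < j1'\<close> f a1 a2 by auto
    next
      case False
      then have T: "i2 < i1" using d by simp
      have "j2 < j1" "j1' < j2'" using m1(5) m2(5) g T by auto
      have "i1 < i2'"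
      proof (rule ccontr)
        assume "\<not> i1 < i2'"
        then have "i2' < i1" using d2 by simp
        then show False using m2(7) g \<open>j2 < j1\<close> a1 \<open>j1' < j2'\<close> by auto
      qed
      have "i1' < i2'"
      proof (rule ccontr)
        assume "\<not> i1' < i2'"
        then have "i2' < i1'" using d2 by simp
        then show False using m1(8) g \<open>j1' < j2'\<close> by auto
      qed
      then show ?thesis unfolding nested4_def using T \<open>j2 < j1\<close> \<open>j1' < j2'\<close> f a1 a2 by auto
    qed
  qed
  have C3: "nested2 (i, j) (a, b, a', b')"
    if f: "two_cycle (gr n s1) (gr n s2) i j" "four_cycle (gr n s1) (gr n s2) a b a' b'" "a < a'" for i j a b a' b'
  proof (rule ccontr)
    assume nn: "\<not> nested2 (i, j) (a, b, a', b')"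
    have ab: "b < b'" using C1 f unfolding aligned_def by blast
    have g: "i \<in> ?S" "s1 i = j" "s2 i = j" "a \<in> ?S" "a' \<in> ?S" "s1 a = b" "s1 a' = b'" "s2 a = b'" "s2 a' = b"
      using f unfolding fc_gr tc_gr by auto
    have ia: "i \<noteq> a" "i \<noteq> a'" using g ab by auto
    define R where "R = {i, a, a'}"
    have RS: "R \<subseteq> ?S" using g R_def by auto
    obtain t1 where t1: "t1 permutes ?S" "\<forall>x. x \<notin> R \<longrightarrow> t1 x = s1 x"
      "\<forall>p\<in>R. \<forall>q\<in>R. p < q \<longrightarrow> t1 p < t1 q" "costf n A t1 \<le> costf n A s1" "t1 = s1 \<or> W n s1 < W n t1"
      using sort1[OF assms(1) RS p1] by blast
    obtain t2 where t2: "t2 permutes ?S" "\<forall>x. x \<notin> R \<longrightarrow> t2 x = s2 x"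
      "\<forall>p\<in>R. \<forall>q\<in>R. p < q \<longrightarrow> t2 q < t2 p" "costf n B t2 \<le> costf n B s2" "t2 = s2 \<or> W n t2 < W n s2"
      using sort2[OF assms(2) RS p2] by blast
    define T where "T = {j, b, b'}"
    have im1: "t1 ` R = T" using img_eq[OF p1 t1(1) t1(2)] g unfolding R_def T_def by auto
    have im2: "t2 ` R = T" using img_eq[OF p2 t2(1) t2(2)] g unfolding R_def T_def by auto
    have finT: "finite T" and cT: "card T \<le> 3" unfolding T_def by (auto simp: card_insert_if)
    have mem1: "t1 x \<in> T" if "x \<in> R" for x using im1 that by blast
    have mem2: "t2 x \<in> T" if "x \<in> R" for x using im2 that by blast
    have RR: "i \<in> R" "a \<in> R" "a' \<in> R" unfolding R_def by auto
    have "\<exists>m\<in>R. t1 m = t2 m"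
    proof -
      consider "i < a" | "a < i \<and> i < a'" | "a' < i" using ia by linarith
      then show ?thesis
      proof cases
        case 1
        have "t1 a = t2 a" using t1(3) t2(3) RR 1 \<open>a < a'\<close>
          by (intro mid[OF finT cT, of "t1 i" _ "t1 a'" "t2 a'" _ "t2 i"]) (auto intro: mem1 mem2)
        then show ?thesis using RR by blast
      next
        case 2
        have "t1 i = t2 i" using t1(3) t2(3) RR 2
          by (intro mid[OF finT cT, of "t1 a" _ "t1 a'" "t2 a'" _ "t2 a"]) (auto intro: mem1 mem2)
        then show ?thesis using RR by blast
      next
        case 3
        have "t1 a' = t2 a'" using t1(3) t2(3) RR 3 \<open>a < a'\<close>
          by (intro mid[OF finT cT, of "t1 a" _ "t1 i" "t2 i" _ "t2 a"]) (auto intro: mem1 mem2)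
        then show ?thesis using RR by blast
      qed
    qed
    then obtain m where m: "m \<in> R" "t1 m = t2 m" by blast
    have "card {x\<in>?S. s1 x = s2 x} \<le> card {x\<in>?S. t1 x = t2 x}"
    proof (rule cardlem[OF finS finS _ _ _ m(1)])
      show "{x\<in>?S. s1 x = s2 x} - R \<subseteq> {x\<in>?S. t1 x = t2 x}" using t1(2) t2(2) by auto
      show "{x\<in>?S. s1 x = s2 x} \<inter> R \<subseteq> {i}" using g ab unfolding R_def by auto
      show "m \<in> {x\<in>?S. t1 x = t2 x}" using m RS by auto
    qed
    then have "t1 = s1 \<and> t2 = s2" using key[OF t1(1) t2(1) _ t1(4) t2(4) t1(5) t2(5)] kc by linarith
    then have inc: "\<forall>p\<in>R. \<forall>q\<in>R. p < q \<longrightarrow> s1 p < s1 q" and dec: "\<forall>p\<in>R. \<forall>q\<in>R. p < q \<longrightarrow> s2 q < s2 p"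
      using t1(3) t2(3) by auto
    have "a < i \<and> i < a' \<and> b < j \<and> j < b'"
    proof -
      have "\<not> i < a" using inc dec RR g ab by force
      moreover have "\<not> a' < i" using inc dec RR g ab by force
      ultimately have "a < i" "i < a'" using ia by auto
      then show ?thesis using inc dec RR g by force
    qed
    then show False using nn unfolding nested2_def by auto
  qed
  show ?thesis
  proof (intro exI conjI)
    show "recov_optimal n k A B (gr n s1) (gr n s2)"
      unfolding recov_optimal_def
    proof (intro conjI allI impI)
      show "recov_feasible n k (gr n s1) (gr n s2)"
        unfolding recov_feasible_def using gr_pm p1 p2 kc card_gr_int by metis
      fix N1 N2 assume "recov_feasible n k N1 N2"
      then obtain v1 v2 where v: "v1 permutes ?S" "v2 permutes ?S" "N1 = gr n v1" "N2 = gr n v2" "k \<le> card (N1 \<inter> N2)"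
        unfolding recov_feasible_def using pm_gr by metis
      then have "(v1, v2) \<in> F" unfolding F_def using card_gr_int by auto
      from opt[OF this] show "mcost A (gr n s1) + mcost B (gr n s2) \<le> mcost A N1 + mcost B N2"
        unfolding cf_def using v by (simp add: mcost_gr costf_def)
    qed
    show "\<forall>i j i' j'. four_cycle (gr n s1) (gr n s2) i j i' j' \<and> i < i' \<longrightarrow> aligned i j i' j'"
      using C1 by blast
    show "\<forall>i1 j1 i1' j1' i2 j2 i2' j2'.
           four_cycle (gr n s1) (gr n s2) i1 j1 i1' j1' \<and> i1 < i1' \<and>
           four_cycle (gr n s1) (gr n s2) i2 j2 i2' j2' \<and> i2 < i2' \<and>
           (i1, j1, i1', j1') \<noteq> (i2, j2, i2', j2') \<longrightarrow>
           nested4 (i1, j1, i1', j1') (i2, j2, i2', j2') \<or> nested4 (i2, j2, i2', j2') (i1, j1, i1', j1')"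
      using C2 by blast
    show "\<forall>i j i2 j2 i2' j2'. two_cycle (gr n s1) (gr n s2) i j \<and> four_cycle (gr n s1) (gr n s2) i2 j2 i2' j2' \<and> i2 < i2' \<longrightarrow>
           nested2 (i, j) (i2, j2, i2', j2')"
      using C3 by blast
  qed
qed

end
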